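(* For every $n\in\mathbb{N}$ and every $m\in\{0,1,\dots,n\}$, \[ \sum_{j=0}^{n}\sum_{i=0}^{j}\frac{\binom{2n+2}{i}}{\binom{2n-m}{j}}=2^{m-1}(2n+1-m)\left(H_n+\frac{2^{2n+1}}{(n+1)\binom{2n+1}{n+1}}+\sum_{k=1}^{m}\frac{1}{2^{k-1}k}\left(\frac{\frac{2^{2n+2}k}{2n+2-k}-\binom{2n+2}{n+1}}{2\binom{2n+1-k}{n+1}}+1\right)\right). \]
   Context: $H_n=\sum_{k=1}^{n}\frac1k$ is the $n$-th harmonic number ($H_0=0$). Empty sums are $0$. *)

theory Defs
  imports "HOL-Analysis.Analysis"
begin

end

theory Submission
  imports Defs
begin

definition AA :: "nat \<Rightarrow> nat \<Rightarrow> real" where "AA a j = (\<Sum>i=0..j. real (a choose i))"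
definition RR :: "nat \<Rightarrow> nat \<Rightarrow> nat \<Rightarrow> real" where "RR u a M = (\<Sum>j=0..u. AA a j / real (M choose j))"

lemma recip:
  assumes "j \<le> M"
  shows "1 / real (M choose j) = (real M + 1)/(real M + 2) * (1/real (Suc M choose j) + 1/real (Suc M choose Suc j))"
proof -
  have h1: "real (Suc M choose j) * (real M + 1 - real j) = (real M + 1) * real (M choose j)"
  proof -
    have "real (Suc M - j) * real (Suc M choose j) = real (Suc M) * real (M choose j)"
      using binomial_absorb_comp[of "Suc M" j] by (metis diff_Suc_1 of_nat_mult)
    moreover have "real (Suc M - j) = real M + 1 - real j" using assms by (simp add: of_nat_diff)
    ultimately show ?thesis by (simp add: algebra_simps)
  qed
  have h2: "real (Suc M choose Suc j) * (real j + 1) = (real M + 1) * real (M choose j)"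
  proof -
    have "real (Suc M * (M choose j)) = real ((Suc M choose Suc j) * Suc j)"
      using Suc_times_binomial_eq[of M j] by presburger
    then show ?thesis by (simp add: algebra_simps)
  qed
  have p: "real (M choose j) > 0" using assms by simp
  have p1: "real (Suc M choose j) > 0" using assms by (metis of_nat_0_less_iff zero_less_binomial le_SucI)
  have p2: "real (Suc M choose Suc j) > 0" using assms by (metis of_nat_0_less_iff zero_less_binomial Suc_le_mono)
  have q: "real M + 1 > 0" by simp
  have pq: "(real M + 1) * real (M choose j) \<noteq> 0" using p q by simp
  have e1: "1/real (Suc M choose j) = (real M + 1 - real j) / ((real M + 1) * real (M choose j))"
    using h1 pq p1 by (simp add: field_simps)
  have e2: "1/real (Suc M choose Suc j) = (real j + 1) / ((real M + 1) * real (M choose j))"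
    using h2 pq p2 by (simp add: field_simps)
  have "(real M + 1 - real j) / ((real M + 1) * real (M choose j)) + (real j + 1) / ((real M + 1) * real (M choose j))
     = (real M + 2) / ((real M + 1) * real (M choose j))"
    by (simp add: add_divide_distrib[symmetric])
  moreover have "real M + 2 > 0" by simp
  ultimately show ?thesis unfolding e1 e2 using pq p q by simp
qed

lemma arec: "AA (Suc a) j = 2 * AA a j - real (a choose j)"
proof (induction j)
  case 0 then show ?case by (simp add: AA_def)
next
  case (Suc j)
  have "AA (Suc a) (Suc j) = AA (Suc a) j + real (Suc a choose Suc j)" by (simp add: AA_def)
  also have "\<dots> = 2 * AA a j - real (a choose j) + real (a choose j) + real (a choose Suc j)"
    using Suc by simp
  also have "\<dots> = 2 * AA a (Suc j) - real (a choose Suc j)" by (simp add: AA_def)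
  finally show ?case .
qed

lemma Mrec:
  assumes "u \<le> M"
  shows "RR u a M = (real M + 1)/(real M + 2) * (2 * RR u a (Suc M)
     - (\<Sum>j=0..Suc u. real (a choose j) / real (Suc M choose j)) + AA a (Suc u) / real (Suc M choose Suc u))"
  using assms
proof (induction u)
  case 0
  have g: "x > 0 \<Longrightarrow> x/(x+1) * (2 - (1 + b/x) + (1+b)/x) = 1" for x b :: real
    apply (simp add: field_simps) using mult_pos_pos[of x x] by linarith
  have "(real M+1)/(real M+2) * (2 - (1 + real a/(real M+1)) + (1+real a)/(real M + 1)) = 1"
  proof -
    have e: "real M + 2 = (real M + 1) + 1" by simp
    show ?thesis by (subst e) (rule g, simp)
  qed
  moreover have "RR 0 a M = 1" "RR 0 a (Suc M) = 1" by (simp_all add: RR_def AA_def)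
  moreover have "(\<Sum>j=0..Suc 0. real (a choose j)/real(Suc M choose j)) = 1 + real a/(real M+1)"
    by (simp add: add.commute)
  moreover have "AA a (Suc 0) = 1 + real a" by (simp add: AA_def)
  moreover have "real (Suc M choose Suc 0) = real M + 1" by simp
  ultimately show ?case by (simp only: mult_2_right mult_1_right)
next
  case (Suc u)
  have IH: "RR u a M = (real M + 1)/(real M + 2) * (2 * RR u a (Suc M)
     - (\<Sum>j=0..Suc u. real (a choose j) / real (Suc M choose j)) + AA a (Suc u) / real (Suc M choose Suc u))"
    using Suc by simp
  have r: "1 / real (M choose Suc u) = (real M + 1)/(real M + 2) * (1/real (Suc M choose Suc u) + 1/real (Suc M choose Suc (Suc u)))"
    using recip Suc.prems by blast
  have A2: "AA a (Suc (Suc u)) = AA a (Suc u) + real (a choose Suc (Suc u))" by (simp add: AA_def)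
  have alg: "c*(2*(R + A/x1) - (S + b/x2) + (A + b)/x2) = c*(2*R - S + A/x1) + A*(c*(1/x1 + 1/x2))"
    for c R A x1 S b x2 :: real by (simp add: divide_inverse algebra_simps)
  have "RR (Suc u) a M = RR u a M + AA a (Suc u) * (1 / real (M choose Suc u))" by (simp add: RR_def)
  also have "\<dots> = (real M + 1)/(real M + 2) * (2 * (RR u a (Suc M) + AA a (Suc u) / real (Suc M choose Suc u))
     - ((\<Sum>j=0..Suc u. real (a choose j) / real (Suc M choose j)) + real (a choose Suc (Suc u)) / real (Suc M choose Suc (Suc u)))
     + (AA a (Suc u) + real (a choose Suc (Suc u))) / real (Suc M choose Suc (Suc u)))"
    unfolding IH r alg by simp
  also have "\<dots> = (real M + 1)/(real M + 2) * (2 * RR (Suc u) a (Suc M)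
     - (\<Sum>j=0..Suc (Suc u). real (a choose j) / real (Suc M choose j)) + AA a (Suc (Suc u)) / real (Suc M choose Suc (Suc u)))"
    unfolding A2 by (simp add: RR_def)
  finally show ?case .
qed

lemma ratio: "real (a choose Suc j) * (real j + 1) = (real a - real j) * real (a choose j)"
proof (cases "j \<le> a")
  case True
  have "Suc j * (a choose Suc j) = (a - j) * (a choose j)"
    using binomial_absorption[of j a] binomial_absorb_comp[of a j] by simp
  then have "real (Suc j) * real (a choose Suc j) = real (a - j) * real (a choose j)"
    by (metis of_nat_mult)
  then show ?thesis using True by (simp add: of_nat_diff algebra_simps)
next
  case False
  then have "a < j" "a < Suc j" by simp_all
  then show ?thesis by (simp add: binomial_eq_0)
qed

lemma telescope:
  assumes "k < M" "real a \<noteq> real M + 1"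
  shows "(\<Sum>j=0..k. real (a choose j) / real (M choose j)) = (real M + 1)/(real M + 1 - real a)
     - (real M - real k)/(real M + 1 - real a) * (real (a choose Suc k) / real (M choose Suc k))"
  using assms(1)
proof (induction k)
  case 0
  have d: "real M + 1 - real a \<noteq> 0" using assms(2) by simp
  have M: "real M \<noteq> 0" using 0 by simp
  have "(real M + 1)/(real M + 1 - real a) - real M/(real M + 1 - real a) * (real a / real M) = 1"
  proof -
    have "real M/(real M + 1 - real a) * (real a / real M) = real a/(real M + 1 - real a)" using M by simp
    then show ?thesis using d by (simp add: diff_divide_distrib[symmetric])
  qed
  then show ?case by simp
next
  case (Suc k)
  define d where "d = real M + 1 - real a"
  have d: "d \<noteq> 0" using assms(2) by (simp add: d_def)
  have IH: "(\<Sum>j=0..k. real (a choose j) / real (M choose j)) = (real M + 1)/d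
     - (real M - real k)/d * (real (a choose Suc k) / real (M choose Suc k))"
    using Suc by (simp add: d_def)
  define p where "p = real (M choose Suc k)"
  define q where "q = real (M choose Suc (Suc k))"
  define x where "x = real (a choose Suc k)"
  define y where "y = real (a choose Suc (Suc k))"
  have pp: "p > 0" using Suc.prems by (simp add: p_def)
  have qq: "q > 0" using Suc.prems by (simp add: q_def)
  have ry: "y * (real k + 2) = (real a - real k - 1) * x"
    using ratio[of a "Suc k"] by (simp add: x_def y_def algebra_simps)
  have rq: "q * (real k + 2) = (real M - real k - 1) * p"
    using ratio[of M "Suc k"] by (simp add: p_def q_def algebra_simps)
  have Mk: "real M - real k - 1 > 0" using Suc.prems by simp
  have yq: "y / q = (real a - real k - 1) * x / ((real M - real k - 1) * p)"
  proof -
    have "y = (real a - real k - 1) * x / (real k + 2)" using ry by (simp add: field_simps)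
    moreover have "q = (real M - real k - 1) * p / (real k + 2)" using rq by (simp add: field_simps)
    ultimately show ?thesis by simp
  qed
  have "(\<Sum>j=0..Suc k. real (a choose j) / real (M choose j)) = (real M + 1)/d - (real M - real k)/d * (x/p) + x/p"
    using IH by (simp add: x_def p_def)
  also have "\<dots> = (real M + 1)/d - (real M - real (Suc k))/d * (y/q)"
  proof -
    define t where "t = real M - real k - 1"
    have g: "C/d - (t+1)/d*(x/p) + x/p = C/d - t/d*((t+1-d)*x/(t*p))"
      if "d \<noteq> 0" "p \<noteq> 0" "t \<noteq> 0" for C d p t x :: real
      using that by (simp add: field_simps)
    have e1: "real M - real k = t + 1" "real M - real (Suc k) = t" "real a - real k - 1 = t + 1 - d"
      by (simp_all add: t_def d_def)
    show ?thesis unfolding yq e1 t_def[symmetric] add_diff_cancel_right'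
      by (rule g) (use d pp Mk t_def in auto)
  qed
  finally show ?case by (simp add: d_def y_def q_def)
qed

lemma halfsum_odd: "(\<Sum>i=0..n. real ((2*n+1) choose i)) = 4^n"
proof -
  have r: "(\<Sum>i=Suc n..2*n+1. (2*n+1) choose i) = (\<Sum>i=0..n. (2*n+1) choose i)"
    by (rule sum.reindex_bij_witness[of _ "\<lambda>i. 2*n+1-i" "\<lambda>i. 2*n+1-i"])
       (auto simp: binomial_symmetric[symmetric])
  have "(\<Sum>i=0..2*n+1. (2*n+1) choose i) = 2^(2*n+1)"
    using choose_row_sum[of "2*n+1"] by (simp add: atLeast0AtMost)
  moreover have "(\<Sum>i=0..2*n+1. (2*n+1) choose i) = (\<Sum>i=0..n. (2*n+1) choose i) + (\<Sum>i=Suc n..2*n+1. (2*n+1) choose i)"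
    using sum.ub_add_nat[of 0 n "\<lambda>i. (2*n+1) choose i" "n+1"] by (simp add: mult_2)
  ultimately have "2 * (\<Sum>i=0..n. (2*n+1) choose i) = 2 * 4^n" using r by (simp add: power_mult)
  then have "(\<Sum>i=0..n. (2*n+1) choose i) = 4^n" by simp
  then show ?thesis by (metis of_nat_sum of_nat_numeral of_nat_power)
qed

lemma halfsum_even: "2 * AA (2*n) n = 4^n + real ((2*n) choose n)"
  using arec[of "2*n" n] halfsum_odd[of n] by (simp add: AA_def)

lemma harmsum:
  assumes "u < N"
  shows "(\<Sum>j=0..u. real (N choose j) / real ((N-1) choose j)) = real N * (harm N - harm (N - Suc u))"
  using assms
proof (induction u)
  case 0
  then have "harm N = harm (N - 1) + 1 / (real N :: real)"
    using harm_Suc[of "N-1"] by (simp add: inverse_eq_divide)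
  then show ?case using 0 by simp
next
  case (Suc u)
  have t: "real (N choose Suc u) / real ((N-1) choose Suc u) = real N / (real N - real (Suc u))"
  proof -
    have "real (N - Suc u) * real (N choose Suc u) = real N * real ((N-1) choose Suc u)"
      using binomial_absorb_comp[of N "Suc u"] by (metis of_nat_mult)
    moreover have "real (N - Suc u) = real N - real (Suc u)" using Suc.prems by (simp add: of_nat_diff)
    moreover have "real ((N-1) choose Suc u) > 0" using Suc.prems by simp
    moreover have "real N - real (Suc u) > 0" using Suc.prems by simp
    ultimately show ?thesis by (simp add: field_simps)
  qed
  have h: "harm (N - Suc u) = harm (N - Suc (Suc u)) + 1 / (real N - real (Suc u) :: real)"
    using harm_Suc[of "N - Suc (Suc u)"] Suc.prems by (simp add: inverse_eq_divide Suc_diff_Suc of_nat_diff)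
  have "(\<Sum>j=0..Suc u. real (N choose j) / real ((N-1) choose j)) =
     real N * (harm N - harm (N - Suc u)) + real N / (real N - real (Suc u))"
    using Suc t by simp
  also have "\<dots> = real N * (harm N - harm (N - Suc (Suc u)))"
    unfolding h by (simp add: algebra_simps)
  finally show ?case .
qed

lemma base_alg2:
  fixes a1 a2 a3 H h2 z R0 R1 R2 D B :: real
  assumes a1: "a1 > 0" and a2: "a2 > 0" and a3: "a3 > 0"
    and e0: "R0 = a1/2*H + 2*a1/a2*z"
    and e1: "2*a2/a1*R0 = 2*R1 - 2*a2*(h2-H) + 2*(2*z+1/2)"
    and e2: "a3/(2*a2)*R1 = 2*R2 - (a2+1) + (2*z+1/2)"
    and e3: "D = R2 + (2*z+1/2)"
    and e4: "B = 4*D - 2*(a2+1) - a3*((h2 + 1/a3) - (H + 1/a2))"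
  shows "B = a3/2*(H + 1/a2) + 4*z"
proof -
  have r0: "2*a2/a1*R0 = a2*H + 4*z" unfolding e0 using a1 a2 by (simp add: field_simps)
  have r1: "R1 = (2*a2*h2 - a2*H - 1)/2"
    using e1 r0 by (simp add: field_simps)
  have r2: "4*R2 = a3*h2 - a3*H/2 - a3/(2*a2) + 2*a2 + 1 - 4*z"
  proof -
    have "4*R2 = 2*(a3/(2*a2)*R1) + 2*a2 + 1 - 4*z" using e2 by simp
    also have "a3/(2*a2)*R1 = (a3*h2 - a3*H/2 - a3/(2*a2))/2" unfolding r1 using a2 by (simp add: field_simps)
    finally show ?thesis by simp
  qed
  have "B = 4*R2 + 8*z + 2 - 2*(a2+1) - a3*h2 - 1 + a3*H + a3/a2"
    unfolding e4 e3 using a3 by (simp add: algebra_simps)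
  also have "\<dots> = a3/2*(H + 1/a2) + 4*z" unfolding r2 using a2 by (simp add: field_simps)
  finally show ?thesis .
qed

lemma base_alg:
  fixes a1 a2 a3 H h2 P c0 Cn Aa R0 R1 R2 D B :: real
  assumes a1: "a1 > 0" and a2: "a2 > 0" and a3: "a3 > 0" and c0: "c0 > 0"
    and Cn: "Cn = c0*2*a1/a2" and Aa: "Aa = (4*P+Cn)/2"
    and e0: "R0 = a1/2*H + P/c0"
    and e1: "R0 = a1/(2*a2)*(2*R1 - 2*a2*(h2-H) + Aa/(Cn/2))"
    and e2: "R1 = (2*a2)/a3*(2*R2 - (a2+1) + Aa/Cn)"
    and e3: "D = R2 + Aa/Cn"
    and e4: "B = 4*D - 2*(a2+1) - a3*((h2 + 1/a3) - (H + 1/a2))"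
  shows "B = a3/2*(H + 1/a2) + 4*P/Cn"
proof -
  have Cp: "Cn > 0" using Cn c0 a1 a2 by simp
  have q: "Aa/Cn = 2*(P/Cn) + 1/2" unfolding Aa using Cp by (simp add: field_simps)
  have pc: "P/c0 = 2*a1/a2*(P/Cn)" unfolding Cn using c0 a1 a2 by (simp add: field_simps)
  have f1: "2*a2/a1*R0 = 2*R1 - 2*a2*(h2-H) + 2*(2*(P/Cn)+1/2)"
  proof -
    have a: "2*a2/a1*(a1/(2*a2)*X) = X" for X using a1 a2 by simp
    have b: "Aa/(Cn/2) = 2*(Aa/Cn)" by simp
    show ?thesis unfolding e1 b q[symmetric] by (rule a)
  qed
  have f2: "a3/(2*a2)*R1 = 2*R2 - (a2+1) + (2*(P/Cn)+1/2)"
  proof -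
    have a: "a3/(2*a2)*((2*a2)/a3*X) = X" for X using a3 a2 by simp
    show ?thesis unfolding e2 q[symmetric] by (rule a)
  qed
  have "B = a3/2*(H + 1/a2) + 4*(P/Cn)"
    by (rule base_alg2[OF a1 a2 a3 _ f1 f2 _ e4]) (use e0 pc e3 q in simp_all)
  then show ?thesis by simp
qed

lemma stepA: "RR n (2*n+2) (2*n) = 4*RR n (2*n) (2*n) - 2*(real n+1) - (2*real n+1)*(harm(2*n+1) - harm n)"
proof -
  have e: "2*n+2 = Suc (Suc (2*n))" by simp
  have a: "AA (2*n+2) j = 4*AA (2*n) j - 2*real((2*n) choose j) - real((2*n+1) choose j)" for j
    unfolding e using arec[of "Suc (2*n)" j] arec[of "2*n" j] by simp
  have "RR n (2*n+2) (2*n) = (\<Sum>j=0..n. 4*(AA (2*n) j / real ((2*n) choose j)) - 2 - real((2*n+1) choose j)/real ((2*n) choose j))"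
    unfolding RR_def
  proof (rule sum.cong)
    fix j assume "j \<in> {0..n}"
    then have "real ((2*n) choose j) > 0" by simp
    then show "AA (2*n+2) j / real ((2*n) choose j) = 4*(AA (2*n) j / real ((2*n) choose j)) - 2 - real((2*n+1) choose j)/real ((2*n) choose j)"
      unfolding a by (simp add: field_simps)
  qed simp
  also have "\<dots> = 4*RR n (2*n) (2*n) - 2*(real n+1) - (\<Sum>j=0..n. real((2*n+1) choose j)/real ((2*n) choose j))"
    by (simp add: sum_subtractf sum_distrib_left RR_def)
  also have "(\<Sum>j=0..n. real((2*n+1) choose j)/real ((2*n) choose j)) = (2*real n+1)*(harm(2*n+1) - harm n)"
    using harmsum[of n "2*n+1"] by simp
  finally show ?thesis .
qed

lemma binrels:
  shows "real ((2*k+2) choose (k+1)) = 2 * real ((2*k+1) choose (k+1))"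
    and "real ((2*k+1) choose (k+1)) * (real k + 1) = (2*real k+1) * real ((2*k) choose k)"
proof -
  have "Suc (2*k+1) * ((2*k+1) choose k) = ((2*k+2) choose (k+1)) * Suc k"
    using Suc_times_binomial_eq[of "2*k+1" k] by simp
  moreover have "(2*k+1) choose k = (2*k+1) choose (k+1)"
    using binomial_symmetric[of k "2*k+1"] by simp
  ultimately have "(2*k+2) * ((2*k+1) choose (k+1)) = ((2*k+2) choose (k+1)) * (k+1)" by simp
  then have "2 * ((2*k+1) choose (k+1)) * (k+1) = ((2*k+2) choose (k+1)) * (k+1)" by (simp add: algebra_simps)
  then have "2 * ((2*k+1) choose (k+1)) = ((2*k+2) choose (k+1))"
    by (metis mult_cancel2 add_is_0 zero_neq_one)
  then show "real ((2*k+2) choose (k+1)) = 2 * real ((2*k+1) choose (k+1))"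
    by (metis of_nat_mult of_nat_numeral)
  have "Suc (2*k) * ((2*k) choose k) = ((2*k+1) choose (k+1)) * Suc k"
    using Suc_times_binomial_eq[of "2*k" k] by simp
  then have "real (Suc (2*k)) * real ((2*k) choose k) = real ((2*k+1) choose (k+1)) * real (Suc k)"
    by (metis of_nat_mult)
  then show "real ((2*k+1) choose (k+1)) * (real k + 1) = (2*real k+1) * real ((2*k) choose k)"
    by (simp add: algebra_simps)
qed

lemma baseB: "RR n (2*n+2) (2*n) = (2*real n+1)/2 * harm n + 4^n / real ((2*n) choose n)"
proof (induction n)
  case 0
  then show ?case by (simp add: RR_def AA_def harm_def)
next
  case (Suc k)
  define a1 where "a1 = 2*real k + 1"
  define a2 where "a2 = real k + 1"
  define a3 where "a3 = 2*real k + 3"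
  define H where "H = (harm k :: real)"
  define h2 where "h2 = (harm (2*k+2) :: real)"
  define P where "P = (4::real)^k"
  define c0 where "c0 = real ((2*k) choose k)"
  define Cn where "Cn = real ((2*k+2) choose (k+1))"
  define Aa where "Aa = AA (2*k+2) (k+1)"
  define R0 where "R0 = RR k (2*k+2) (2*k)"
  define R1 where "R1 = RR k (2*k+2) (2*k+1)"
  define R2 where "R2 = RR k (2*k+2) (2*k+2)"
  define D where "D = RR (Suc k) (2*k+2) (2*k+2)"
  define B where "B = RR (Suc k) (2*Suc k+2) (2*Suc k)"
  have pa: "a1 > 0" "a2 > 0" "a3 > 0" by (simp_all add: a1_def a2_def a3_def)
  have c0p: "c0 > 0" by (simp add: c0_def)
  have C1: "real ((2*k+1) choose (k+1)) = Cn/2" using binrels(1)[of k] by (simp add: Cn_def)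
  have CnE: "Cn = c0*2*a1/a2"
  proof -
    have "Cn/2 * a2 = a1 * c0" using binrels(2)[of k] unfolding C1 by (simp add: a1_def a2_def c0_def)
    then show ?thesis using pa by (simp add: field_simps)
  qed
  have AaE: "Aa = (4*P+Cn)/2"
  proof -
    have "2 * AA (2*(k+1)) (k+1) = 4^(k+1) + real ((2*(k+1)) choose (k+1))" by (rule halfsum_even)
    then show ?thesis by (simp add: Aa_def P_def Cn_def algebra_simps)
  qed
  have e0: "R0 = a1/2*H + P/c0" using Suc.IH by (simp add: R0_def a1_def H_def P_def c0_def)
  have e1: "R0 = a1/(2*a2)*(2*R1 - 2*a2*(h2-H) + Aa/(Cn/2))"
  proof -
    have m: "RR k (2*k+2) (2*k) = (real (2*k)+1)/(real (2*k)+2) * (2 * RR k (2*k+2) (Suc (2*k))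
     - (\<Sum>j=0..Suc k. real ((2*k+2) choose j) / real (Suc (2*k) choose j)) + AA (2*k+2) (Suc k) / real (Suc (2*k) choose Suc k))"
      by (rule Mrec) simp
    have hs: "(\<Sum>j=0..Suc k. real ((2*k+2) choose j) / real (Suc (2*k) choose j)) = 2*a2*(h2-H)"
      using harmsum[of "Suc k" "2*k+2"] by (simp add: a2_def h2_def H_def algebra_simps)
    have c: "real (Suc (2*k) choose Suc k) = Cn/2" using C1 by simp
    show ?thesis using m unfolding hs c
      by (simp add: R0_def R1_def Aa_def a1_def a2_def algebra_simps)
  qed
  have e2: "R1 = (2*a2)/a3*(2*R2 - (a2+1) + Aa/Cn)"
  proof -
    have m: "RR k (2*k+2) (2*k+1) = (real (2*k+1)+1)/(real (2*k+1)+2) * (2 * RR k (2*k+2) (Suc (2*k+1))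
     - (\<Sum>j=0..Suc k. real ((2*k+2) choose j) / real (Suc (2*k+1) choose j)) + AA (2*k+2) (Suc k) / real (Suc (2*k+1) choose Suc k))"
      by (rule Mrec) simp
    have hs: "(\<Sum>j=0..Suc k. real ((2*k+2) choose j) / real (Suc (2*k+1) choose j)) = a2 + 1"
    proof -
      have "(\<Sum>j=0..Suc k. real ((2*k+2) choose j) / real (Suc (2*k+1) choose j)) = (\<Sum>j=0..Suc k. 1)"
        by (rule sum.cong) auto
      then show ?thesis by (simp add: a2_def)
    qed
    have c: "real (Suc (2*k+1) choose Suc k) = Cn" by (simp add: Cn_def)
    have s2: "Suc (2*k+1) = 2*k+2" by simp
    have q1: "real (2*k+1)+1 = 2*a2" "real (2*k+1)+2 = a3" "Suc k = k+1"
      by (simp_all add: a2_def a3_def)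
    have hs': "(\<Sum>j=0..k+1. real ((2*k+2) choose j) / real ((2*k+2) choose j)) = a2 + 1"
      using hs by simp
    have c': "real ((2*k+2) choose (k+1)) = Cn" by (simp add: Cn_def)
    show ?thesis using m unfolding s2 q1 hs' c' R1_def R2_def Aa_def .
  qed
  have e3: "D = R2 + Aa/Cn" by (simp add: D_def R2_def RR_def Aa_def Cn_def)
  have e4: "B = 4*D - 2*(a2+1) - a3*((h2 + 1/a3) - (H + 1/a2))"
  proof -
    have b: "B = 4*D - 2*(a2+1) - a3*(harm(2*Suc k+1) - harm (Suc k))"
      using stepA[of "Suc k"] by (simp add: B_def D_def a2_def a3_def algebra_simps)
    have f1: "harm(2*Suc k+1) = h2 + 1/a3"
      using harm_Suc[of "2*k+2"] by (simp add: h2_def a3_def inverse_eq_divide algebra_simps)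
    have f2: "harm (Suc k) = H + 1/a2"
      using harm_Suc[of k] by (simp add: H_def a2_def inverse_eq_divide algebra_simps)
    show ?thesis using b unfolding f1 f2 .
  qed
  have "B = a3/2*(H + 1/a2) + 4*P/Cn"
    by (rule base_alg[OF pa c0p CnE AaE e0 e1 e2 e3 e4])
  moreover have "harm (Suc k) = H + 1/a2"
    using harm_Suc[of k] by (simp add: H_def a2_def inverse_eq_divide algebra_simps)
  ultimately show ?case
    by (simp add: B_def a3_def P_def Cn_def algebra_simps)
qed

lemma step_alg:
  fixes g K X Y N1 c d P Tm S0 S1 Tt Aa :: real
  assumes g: "g > 0" and K: "K > 0" and Xp: "X > 0" and d: "d > 0" and X: "X = 2*N1 - K"
    and IH: "S0 = g/2 * X * Tm"
    and Tt: "Tt = X/(-K) - (N1-K)/(-K)*(c/d) + c/d"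
    and Aa: "Aa = (P+c)/2"
    and M: "S1 = Y/X*(2*S0 - Tt + Aa/d)"
  shows "S1 = 2*g/2 * Y * (Tm + 1/(g*K) * ((P*K/X - c)/(2*d) + 1))"
proof -
  have tt: "- Tt + Aa/d = X/K - N1*c/(K*d) + (P+c)/(2*d)"
    unfolding Tt Aa using K d by (simp add: field_simps)
  have e: "X/K - N1*c/(K*d) + (P+c)/(2*d) = X/K*((P*K/X - c)/(2*d) + 1)"
    unfolding X using K d Xp[unfolded X] by (simp add: field_simps)
  have "S1 = Y/X*(2*S0) + Y/X*(- Tt + Aa/d)" unfolding M by (simp add: algebra_simps)
  also have "\<dots> = g*Y*Tm + Y/X*(X/K*((P*K/X - c)/(2*d) + 1))"
    unfolding tt e IH using Xp by simp
  also have "\<dots> = 2*g/2 * Y * (Tm + 1/(g*K) * ((P*K/X - c)/(2*d) + 1))"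
    using Xp g K by (simp add: field_simps)
  finally show ?thesis .
qed

definition TT :: "nat \<Rightarrow> nat \<Rightarrow> real" where
  "TT n m = harm n + 2^(2*n+1) / (real (n+1) * real ((2*n+1) choose (n+1)))
       + (\<Sum>k=1..m. 1 / (2^(k-1) * real k) *
           (((2::real)^(2*n+2) * real k / real (2*n+2-k) - real ((2*n+2) choose (n+1)))
             / (2 * real ((2*n+1-k) choose (n+1))) + 1))"

lemma mainR: "m \<le> n \<Longrightarrow> RR n (2*n+2) (2*n-m) = 2^m/2 * real (2*n+1-m) * TT n m"
proof (induction m)
  case 0
  define c0 where "c0 = real ((2*n) choose n)"
  define C1 where "C1 = real ((2*n+1) choose (n+1))"
  have c0p: "c0 > 0" by (simp add: c0_def)
  have r: "real (n+1) * C1 = (2*real n+1) * c0" using binrels(2)[of n] by (simp add: C1_def c0_def algebra_simps)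
  have p: "(2::real)^(2*n+1) = 2*4^n" by (simp add: power_add power_mult)
  have "RR n (2*n+2) (2*n) = (2*real n+1)/2 * harm n + 4^n / c0" using baseB[of n] by (simp add: c0_def)
  also have "\<dots> = 1/2 * (2*real n+1) * (harm n + 2*4^n / ((2*real n+1) * c0))"
  proof -
    have cc: "(2*real n+1) * (2*4^n/((2*real n+1)*c0)) = 2*4^n/c0"
    proof -
      have gen: "x \<noteq> 0 \<Longrightarrow> x * (y/(x*z)) = y/z" for x y z :: real by simp
      have "2*real n+1 \<noteq> 0" by (simp add: add_nonneg_eq_0_iff)
      then show ?thesis by (rule gen)
    qed
    have "1/2 * (2*real n+1) * (harm n + 2*4^n / ((2*real n+1) * c0))
       = (2*real n+1)/2 * harm n + 1/2*((2*real n+1) * (2*4^n / ((2*real n+1) * c0)))"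
      by (simp add: algebra_simps)
    then show ?thesis unfolding cc by simp
  qed
  also have "\<dots> = 2^0/2 * real (2*n+1-0) * TT n 0"
    unfolding TT_def p C1_def[symmetric] r by simp
  finally show ?case by simp
next
  case (Suc m)
  have mn: "m < n" using Suc.prems by simp
  define a where "a = 2*n+2"
  define M where "M = 2*n - Suc m"
  define M' where "M' = 2*n - m"
  have sM: "Suc M = M'" using mn by (simp add: M_def M'_def)
  define g where "g = (2::real)^m"
  define K where "K = real (Suc m)"
  define X where "X = real (2*n+1-m)"
  define Y where "Y = real (2*n+1-Suc m)"
  define N1 where "N1 = real n + 1"
  define c where "c = real ((2*n+2) choose (n+1))"
  define d where "d = real ((2*n-m) choose (n+1))"
  define P where "P = (2::real)^(2*n+2)"
  define Tm where "Tm = TT n m"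
  define S0 where "S0 = RR n a M'"
  define S1 where "S1 = RR n a M"
  define Aa where "Aa = AA a (Suc n)"
  define Tt where "Tt = (\<Sum>j=0..Suc n. real (a choose j) / real (M' choose j))"
  have IH: "S0 = g/2 * X * Tm" using Suc.IH mn by (simp add: S0_def a_def M'_def g_def X_def Tm_def)
  have Mr: "S1 = Y/X*(2*S0 - Tt + Aa/d)"
  proof -
    have m: "RR n a M = (real M + 1)/(real M + 2) * (2 * RR n a (Suc M)
       - (\<Sum>j=0..Suc n. real (a choose j) / real (Suc M choose j)) + AA a (Suc n) / real (Suc M choose Suc n))"
      by (rule Mrec) (use mn in \<open>simp add: M_def\<close>)
    have q1: "real M + 1 = Y" "real M + 2 = X" using mn by (simp_all add: M_def X_def Y_def of_nat_diff)
    have q2: "real (M' choose Suc n) = d" by (simp add: M'_def d_def)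
    show ?thesis using m unfolding sM q1 q2 S1_def S0_def Tt_def Aa_def by simp
  qed
  have TtE: "Tt = X/(-K) - (N1-K)/(-K)*(c/d) + c/d"
  proof -
    have t: "(\<Sum>j=0..n. real (a choose j) / real (M' choose j)) = (real M' + 1)/(real M' + 1 - real a)
     - (real M' - real n)/(real M' + 1 - real a) * (real (a choose Suc n) / real (M' choose Suc n))"
      by (rule telescope) (use mn in \<open>simp_all add: M'_def a_def\<close>)
    have q: "real M' + 1 = X" "real M' + 1 - real a = -K" "real M' - real n = N1 - K"
      "real (a choose Suc n) = c" "real (M' choose Suc n) = d"
      using mn by (simp_all add: M'_def X_def a_def K_def N1_def c_def d_def of_nat_diff)
    show ?thesis unfolding Tt_def sum.atLeast0_atMost_Suc t unfolding q(2) unfolding q by simp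
  qed
  have AaE: "Aa = (P+c)/2"
  proof -
    have "2 * AA (2*(Suc n)) (Suc n) = 4^(Suc n) + real ((2*(Suc n)) choose (Suc n))" by (rule halfsum_even)
    moreover have "(4::real)^(Suc n) = P" by (simp add: P_def power_mult)
    ultimately show ?thesis by (simp add: Aa_def a_def c_def)
  qed
  have gp: "g > 0" "K > 0" "X > 0" "d > 0" using mn by (simp_all add: g_def K_def X_def d_def)
  have XE: "X = 2*N1 - K" using mn by (simp add: X_def N1_def K_def of_nat_diff)
  have res: "S1 = 2*g/2 * Y * (Tm + 1/(g*K) * ((P*K/X - c)/(2*d) + 1))"
    by (rule step_alg[OF gp XE IH TtE AaE Mr])
  have Tsuc: "TT n (Suc m) = Tm + 1/(g*K) * ((P*K/X - c)/(2*d) + 1)"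
  proof -
    have q: "(2::real)^(Suc m - 1) = g" "real (2*n+2-Suc m) = X" "2*n+1-Suc m = 2*n-m"
      by (simp_all add: g_def X_def)
    show ?thesis unfolding TT_def Tm_def by (simp add: K_def P_def c_def d_def g_def X_def)
  qed
  have "RR n (2*n+2) (2*n - Suc m) = S1" by (simp add: S1_def a_def M_def)
  also have "\<dots> = 2^(Suc m)/2 * real (2*n+1-Suc m) * TT n (Suc m)"
    unfolding res Tsuc by (simp add: g_def Y_def)
  finally show ?case .
qed

theorem mainTheorem9:
  fixes n m :: nat
  assumes "m \<le> n"
  shows "(\<Sum>j=0..n. \<Sum>i=0..j. real ((2*n+2) choose i) / real ((2*n-m) choose j))
    = (2::real) powr (real m - 1) * real (2*n+1-m) *
      (harm n + 2^(2*n+1) / (real (n+1) * real ((2*n+1) choose (n+1)))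
       + (\<Sum>k=1..m. 1 / (2^(k-1) * real k) *
           (((2::real)^(2*n+2) * real k / real (2*n+2-k) - real ((2*n+2) choose (n+1)))
             / (2 * real ((2*n+1-k) choose (n+1))) + 1)))"
proof -
  have l: "(\<Sum>j=0..n. \<Sum>i=0..j. real ((2*n+2) choose i) / real ((2*n-m) choose j)) = RR n (2*n+2) (2*n-m)"
    unfolding RR_def AA_def by (simp add: sum_divide_distrib)
  have p: "(2::real) powr (real m - 1) = 2^m/2"
    by (simp add: powr_diff powr_realpow)
  show ?thesis unfolding l p mainR[OF assms] TT_def ..
qed

end
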